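(* Let $X$ and $Y$ be Banach spaces, $C\in \mathcal{L}(X,Y)$, $(S_t)_{t\geq 0}$ a $C_0$-semigroup on $X$, $M \geq 1$ and $\omega \in \mathbb{R}$ such that $\lVert S_t \rVert \leq M e^{\omega t}$ for all $t \geq 0$, $\lambda^* \geq 0$, and $(P_\lambda)_{\lambda>\lambda^*}$ a family of bounded linear operators in $X$. Assume that there exist $d_0,d_1,\gamma_1 > 0$ such that \[ \forall x\in X \ \forall \lambda > \lambda^* \colon \quad \lVert P_\lambda x \rVert_{ X } \le d_0 e^{d_1 \lambda^{\gamma_1}} \lVert C P_\lambda x \rVert_{Y }, \] and that there exist $d_2\geq 1$ and $d_3,\gamma_2,\gamma_3, T>0$ with $\gamma_1<\gamma_2$ such that \[ \forall x\in X \ \forall \lambda > \lambda^* \ \forall t\in (0,T/2] \colon \quad \lVert (\mathrm{id}-P_\lambda) S_t x \rVert_{X} \le d_2 e^{-d_3 \lambda^{\gamma_2} t^{\gamma_3}} \lVert x \rVert_{X}. \] Then for all $r\in[1,\infty]$ and all $x \in X$, \[ \lVert S_T x \rVert_{X} \leq C_{\mathrm{obs}} \lVert CS_{(\cdot)}x \rVert_{L_r ((0,T);Y)} \quad\text{with}\quad C_{\mathrm{obs}} = \frac{C_1}{T^{1/r}} \exp \left(\frac{C_2}{T^{\frac{\gamma_1 \gamma_3}{\gamma_2 - \gamma_1}}} + C_3 T\right), \] where $T^{1/r} = 1$ if $r=\infty$, and \begin{align*} C_1 &= (4 M d_0) \max \Bigl\{\left( (4d_2 M^2) (d_0 \lVert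 C \rVert_{\mathcal{L} (X,Y)}+1) \right)^{8/(e \ln 2)}, e^{4d_1\left(2\lambda^*\right)^{\gamma_1}}\Bigr\}, \\ C_2 &= 4 \bigl(2^{\gamma_1} (2\cdot 4^{\gamma_3})^\frac{\gamma_1 \gamma_2}{\gamma_2-\gamma_1} d_1^{\gamma_2} / d_3^{\gamma_1} \bigr)^{\frac{1}{\gamma_2-\gamma_1}} , \\ C_3 & = \max\{\omega , 0\} \bigl(1 + 10 / (e \ln 2) \bigr). \end{align*}
   Context: $\mathcal{L}(V,W)$ denotes the space of bounded linear operators between normed spaces $V$ and $W$. For $r=\infty$ the norm $\lVert CS_{(\cdot)}x \rVert_{L_\infty((0,T);Y)}$ is $\operatorname{ess\,sup}_{\tau\in[0,T]}\lVert CS_\tau x\rVert_Y$, and for $r<\infty$ it is $(\int_0^T \lVert C S_\tau x\rVert_Y^r\,d\tau)^{1/r}$. *)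

theory Defs
  imports "HOL-Analysis.Analysis" "HOL-Probability.Probability"
begin

definition C0_semigroup :: "(real \<Rightarrow> ('a::banach \<Rightarrow>\<^sub>L 'a)) \<Rightarrow> bool" where
  "C0_semigroup S \<longleftrightarrow>
     S 0 = id_blinfun \<and>
     (\<forall>t s. 0 \<le> t \<longrightarrow> 0 \<le> s \<longrightarrow> S (t + s) = S t o\<^sub>L S s) \<and>
     (\<forall>x. ((\<lambda>t. blinfun_apply (S t) x) \<longlongrightarrow> x) (at_right 0))"

definition Lr_norm :: "ereal \<Rightarrow> real \<Rightarrow> (real \<Rightarrow> 'b::real_normed_vector) \<Rightarrow> ereal" where
  "Lr_norm r T f =
     (if r = \<infinity> then esssup (restrict_space lborel {0<..<T}) (\<lambda>t. ereal (norm (f t)))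
      else ereal ((LINT t:{0<..<T}|lborel. norm (f t) powr real_of_ereal r)
                   powr (1 / real_of_ereal r)))"

definition T_root :: "ereal \<Rightarrow> real \<Rightarrow> real" where
  "T_root r T = (if r = \<infinity> then 1 else T powr (1 / real_of_ereal r))"

end

theory Submission imports Defs begin

lemma semigroup_right:
  fixes S :: "real \<Rightarrow> ('a::banach \<Rightarrow>\<^sub>L 'a)"
  assumes sg: "C0_semigroup S" and t0: "t0 \<ge> 0"
  shows "((\<lambda>t. S t x) \<longlongrightarrow> S t0 x) (at_right t0)"
proof -
  have lim0: "((\<lambda>t. S t x) \<longlongrightarrow> x) (at_right 0)" using sg unfolding C0_semigroup_def by blast
  have "((\<lambda>h. S t0 (S h x)) \<longlongrightarrow> S t0 x) (at_right 0)"
    by (intro blinfun.tendsto tendsto_const lim0)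
  moreover have "eventually (\<lambda>h. S t0 (S h x) = S (h + t0) x) (at_right 0)"
  proof -
    have "eventually (\<lambda>h::real. h > 0) (at_right 0)" by (simp add: eventually_at_right_less)
    then show ?thesis
    proof (rule eventually_mono)
      fix h :: real assume "h > 0"
      then have "S (t0 + h) = S t0 o\<^sub>L S h" using sg t0 unfolding C0_semigroup_def by auto
      then show "S t0 (S h x) = S (h + t0) x" by (simp add: add.commute)
    qed
  qed
  ultimately have "((\<lambda>h. S (h + t0) x) \<longlongrightarrow> S t0 x) (at_right 0)"
    by (rule Lim_transform_eventually)
  then show ?thesis by (simp add: filterlim_at_right_to_0[of _ _ t0])
qed

lemma semigroup_left:
  fixes S :: "real \<Rightarrow> ('a::banach \<Rightarrow>\<^sub>L 'a)"
  assumes sg: "C0_semigroup S" and t0: "t0 > 0"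
    and growth: "\<forall>t\<ge>0. norm (S t) \<le> M * exp (\<omega> * t)"
  shows "((\<lambda>t. S t x) \<longlongrightarrow> S t0 x) (at_left t0)"
proof -
  have lim0: "((\<lambda>t. S t x) \<longlongrightarrow> x) (at_right 0)" using sg unfolding C0_semigroup_def by blast
  have l1: "((\<lambda>h. x - S h x) \<longlongrightarrow> 0) (at_right 0)"
    using tendsto_diff[OF tendsto_const lim0, of x] by simp
  define K where "K = M * exp (\<bar>\<omega>\<bar> * t0)"
  have ev: "eventually (\<lambda>h::real. 0 < h \<and> h < t0) (at_right 0)"
    using t0 by (auto simp: eventually_at_right_field intro!: exI[of _ t0])
  have "eventually (\<lambda>h. norm (S (t0 - h) x - S t0 x) \<le> norm (x - S h x) * K) (at_right 0)"
    using ev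
  proof (rule eventually_mono)
    fix h :: real assume h: "0 < h \<and> h < t0"
    have sl: "\<forall>t s. 0 \<le> t \<longrightarrow> 0 \<le> s \<longrightarrow> S (t + s) = S t o\<^sub>L S s" using sg unfolding C0_semigroup_def by blast
    have "S ((t0 - h) + h) = S (t0 - h) o\<^sub>L S h" using sl[rule_format, of "t0 - h" h] h by linarith
    then have "S t0 x = S (t0 - h) (S h x)" by simp
    then have "S (t0 - h) x - S t0 x = S (t0 - h) (x - S h x)" by (simp add: blinfun.diff_right)
    then have "norm (S (t0 - h) x - S t0 x) \<le> norm (S (t0 - h)) * norm (x - S h x)"
      by (simp add: norm_blinfun)
    also have "norm (S (t0 - h)) \<le> K"
    proof -
      have "norm (S (t0 - h)) \<le> M * exp (\<omega> * (t0 - h))" using growth h by auto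
      also have "\<dots> \<le> K" unfolding K_def
      proof (rule mult_left_mono)
        have "\<omega> * (t0 - h) \<le> \<bar>\<omega>\<bar> * (t0 - h)" by (rule mult_right_mono) (use h in auto)
        also have "\<dots> \<le> \<bar>\<omega>\<bar> * t0" by (rule mult_left_mono) (use h in auto)
        finally have "\<omega> * (t0 - h) \<le> \<bar>\<omega>\<bar> * t0" .
        then show "exp (\<omega> * (t0 - h)) \<le> exp (\<bar>\<omega>\<bar> * t0)" by simp
        have "norm (S 0) \<le> M" using growth[rule_format, of 0] by simp
        then show "0 \<le> M" using norm_ge_zero order_trans by blast
      qed
      finally show ?thesis .
    qed
    then have "norm (S (t0 - h)) * norm (x - S h x) \<le> K * norm (x - S h x)"
      by (simp add: mult_right_mono)
    finally show "norm (S (t0 - h) x - S t0 x) \<le> norm (x - S h x) * K" by (simp add: mult.commute)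
  qed
  then have "((\<lambda>h. S (t0 - h) x - S t0 x) \<longlongrightarrow> 0) (at_right 0)"
    by (rule tendsto_0_le[OF l1])
  then have "((\<lambda>h. S (t0 - h) x) \<longlongrightarrow> S t0 x) (at_right 0)"
    using Lim_null by blast
  then show ?thesis
    by (simp add: filterlim_at_left_to_right filterlim_at_right_to_0[of _ _ "-t0"])
qed

lemma semigroup_cont:
  fixes S :: "real \<Rightarrow> ('a::banach \<Rightarrow>\<^sub>L 'a)"
  assumes sg: "C0_semigroup S" and T: "T > 0"
    and growth: "\<forall>t\<ge>0. norm (S t) \<le> M * exp (\<omega> * t)"
  shows "continuous_on {0..T} (\<lambda>t. S t x)"
proof (rule continuous_on_IccI)
  show "((\<lambda>t. S t x) \<longlongrightarrow> S 0 x) (at_right 0)" using semigroup_right[OF sg] by simp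
  show "((\<lambda>t. S t x) \<longlongrightarrow> S T x) (at_left T)" using semigroup_left[OF sg T growth] .
  fix t :: real assume "0 < t" "t < T"
  then show "((\<lambda>t. S t x) \<longlongrightarrow> S t x) (at t)"
    using semigroup_left[OF sg _ growth, of t x] semigroup_right[OF sg, of t x] filterlim_at_split by auto
qed (use T in auto)


definition pw :: "ereal \<Rightarrow> real" where
  "pw r = (if r = \<infinity> then 0 else 1 / real_of_ereal r)"

lemma interval_not_null:
  fixes \<alpha> \<beta> :: real
  assumes "\<alpha> < \<beta>" and ae: "AE s in lborel. s \<notin> {\<alpha><..<\<beta>}"
  shows False
proof -
  have m: "{\<alpha><..<\<beta>} \<in> sets lborel" using borel_open[OF open_greaterThanLessThan] by simp
  have "{\<alpha><..<\<beta>} \<in> null_sets lborel" using ae AE_iff_null_sets[OF m] by blast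
  then have "emeasure lborel {\<alpha><..<\<beta>} = 0" by auto
  then show False using assms(1) by simp
qed

lemma esssup_lower:
  fixes g :: "real \<Rightarrow> 'b::real_normed_vector"
  assumes ab: "0 \<le> \<alpha>" "\<alpha> < \<beta>" "\<beta> \<le> T" and V: "\<forall>s\<in>{\<alpha><..<\<beta>}. V \<le> norm (g s)"
  shows "ereal V \<le> esssup (restrict_space lborel {0<..<T}) (\<lambda>t. ereal (norm (g t)))"
    (is "_ \<le> ?e")
proof (rule ccontr)
  assume "\<not> ereal V \<le> ?e"
  then have lt: "?e < ereal V" by simp
  have "AE s in restrict_space lborel {0<..<T}. ereal (norm (g s)) \<le> ?e" by (rule esssup_AE)
  then have "AE s in lborel. s \<in> {0<..<T} \<longrightarrow> ereal (norm (g s)) \<le> ?e"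
    by (subst (asm) AE_restrict_space_iff) auto
  then have "AE s in lborel. s \<notin> {\<alpha><..<\<beta>}"
  proof (rule eventually_mono)
    fix s assume h: "s \<in> {0<..<T} \<longrightarrow> ereal (norm (g s)) \<le> ?e"
    show "s \<notin> {\<alpha><..<\<beta>}"
    proof
      assume s: "s \<in> {\<alpha><..<\<beta>}"
      then have "s \<in> {0<..<T}" using ab by auto
      with h have "ereal (norm (g s)) \<le> ?e" by blast
      moreover have "ereal V \<le> ereal (norm (g s))" using V s by simp
      ultimately have "ereal V \<le> ?e" by (meson order.trans)
      then show False using lt by simp
    qed
  qed
  then show False using interval_not_null ab by blast
qed

lemma lr_reduce:
  fixes g :: "real \<Rightarrow> 'b::banach"
  assumes T: "T > 0" and cont: "continuous_on {0..T} g" and r: "1 \<le> r" and K: "K > 0"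
    and main: "\<And>Q. Q \<ge> 0 \<Longrightarrow> (\<And>\<alpha> \<beta> V. 0 \<le> \<alpha> \<Longrightarrow> \<alpha> < \<beta> \<Longrightarrow> \<beta> \<le> T \<Longrightarrow>
         (\<forall>s\<in>{\<alpha><..<\<beta>}. V \<le> norm (g s)) \<Longrightarrow> V \<le> (1/(\<beta>-\<alpha>)) powr (pw r) * Q) \<Longrightarrow> N \<le> K * Q"
  shows "ereal N \<le> ereal K * Lr_norm r T g"
proof (cases "r = \<infinity>")
  case True
  define e where "e = esssup (restrict_space lborel {0<..<T}) (\<lambda>t. ereal (norm (g t)))"
  have low: "ereal V \<le> e" if "0 \<le> \<alpha>" "\<alpha> < \<beta>" "\<beta> \<le> T" "\<forall>s\<in>{\<alpha><..<\<beta>}. V \<le> norm (g s)" for \<alpha> \<beta> V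
    using esssup_lower[OF that] unfolding e_def .
  have e0: "0 \<le> e" using low[of 0 T 0] T by (simp add: zero_ereal_def)
  have L: "Lr_norm r T g = e" using True unfolding Lr_norm_def e_def by simp
  show ?thesis
  proof (cases "e = \<infinity>")
    case True
    then show ?thesis using K L by simp
  next
    case False
    with e0 obtain Q where Q: "e = ereal Q" "Q \<ge> 0" by (cases e) auto
    have "N \<le> K * Q"
    proof (rule main[OF Q(2)])
      fix \<alpha> \<beta> V assume h: "0 \<le> \<alpha>" "\<alpha> < \<beta>" "\<beta> \<le> T" "\<forall>s\<in>{\<alpha><..<\<beta>}. V \<le> norm (g s)"
      have "ereal V \<le> ereal Q" using low[OF h] Q by simp
      then show "V \<le> (1/(\<beta>-\<alpha>)) powr (pw r) * Q" using h(2) \<open>r = \<infinity>\<close> by (simp add: pw_def)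
    qed
    then show ?thesis using L Q by simp
  qed
next
  case False
  with r obtain \<rho> where rho: "r = ereal \<rho>" "1 \<le> \<rho>" by (cases r) auto
  define h where "h t = norm (g t) powr \<rho>" for t
  define I where "I = (LINT t:{0<..<T}|lborel. h t)"
  have pwr: "pw r = 1 / \<rho>" using rho by (simp add: pw_def)
  have L: "Lr_norm r T g = ereal (I powr (1 / \<rho>))"
    using rho unfolding Lr_norm_def I_def h_def by simp
  have hcont: "continuous_on {0..T} h" unfolding h_def
    using rho by (intro continuous_on_powr' continuous_intros cont) auto
  have "set_integrable lborel {0..T} h"
    unfolding set_integrable_def by (rule borel_integrable_compact[OF compact_Icc hcont])
  then have hint: "set_integrable lborel A h" if "A \<subseteq> {0..T}" "A \<in> sets lborel" for A
    using set_integrable_subset that by blast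
  have h0: "0 \<le> h t" for t unfolding h_def by simp
  have "N \<le> K * I powr (1 / \<rho>)"
  proof (rule main)
    show "0 \<le> I powr (1 / \<rho>)" by simp
    fix \<alpha> \<beta> V assume ab: "0 \<le> \<alpha>" "\<alpha> < \<beta>" "\<beta> \<le> T" and V: "\<forall>s\<in>{\<alpha><..<\<beta>}. V \<le> norm (g s)"
    show "V \<le> (1/(\<beta>-\<alpha>)) powr (pw r) * I powr (1 / \<rho>)"
    proof (cases "V \<le> 0")
      case True
      then show ?thesis by (simp add: order_trans[OF True])
    next
      case False
      then have Vp: "V > 0" by simp
      have c1: "(LINT t:{\<alpha><..<\<beta>}|lborel. V powr \<rho>) = (\<beta> - \<alpha>) * V powr \<rho>"
        using ab by (subst set_integral_const) (auto simp: measure_def)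
      have c2: "(LINT t:{\<alpha><..<\<beta>}|lborel. V powr \<rho>) \<le> (LINT t:{\<alpha><..<\<beta>}|lborel. h t)"
      proof (rule set_integral_mono)
        show "set_integrable lborel {\<alpha><..<\<beta>} (\<lambda>t. V powr \<rho>)"
          unfolding set_integrable_def using ab
          integrable_scaleR_left[OF integrable_indicator[of "{\<alpha><..<\<beta>}" lborel], of "V powr \<rho>"]
          by simp
        show "set_integrable lborel {\<alpha><..<\<beta>} h" using ab by (intro hint) auto
        fix t assume "t \<in> {\<alpha><..<\<beta>}"
        then have "V \<le> norm (g t)" using V by blast
        then show "V powr \<rho> \<le> h t" unfolding h_def using Vp rho by (intro powr_mono2) auto
      qed
      have c3: "(LINT t:{\<alpha><..<\<beta>}|lborel. h t) \<le> I"
        unfolding I_def set_lebesgue_integral_def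
      proof (rule integral_mono)
        have sub: "{\<alpha><..<\<beta>} \<subseteq> {0..T}" "{0<..<T} \<subseteq> {0..T}" using ab by auto
        show "integrable lborel (\<lambda>t. indicator {\<alpha><..<\<beta>} t *\<^sub>R h t)"
          using hint[OF sub(1)] unfolding set_integrable_def by auto
        show "integrable lborel (\<lambda>t. indicator {0<..<T} t *\<^sub>R h t)"
          using hint[OF sub(2)] unfolding set_integrable_def by auto
        fix t show "indicator {\<alpha><..<\<beta>} t *\<^sub>R h t \<le> indicator {0<..<T} t *\<^sub>R h t"
          using ab h0[of t] by (auto split: split_indicator)
      qed
      have "V powr \<rho> \<le> I / (\<beta> - \<alpha>)" using c1 c2 c3 ab by (simp add: field_simps)
      then have "(V powr \<rho>) powr (1/\<rho>) \<le> (I / (\<beta> - \<alpha>)) powr (1/\<rho>)"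
        using rho Vp by (intro powr_mono2) auto
      also have "(V powr \<rho>) powr (1/\<rho>) = V" using rho Vp by (simp add: powr_powr)
      also have "(I / (\<beta> - \<alpha>)) powr (1/\<rho>) = (1/(\<beta>-\<alpha>)) powr (1/\<rho>) * I powr (1/\<rho>)"
      proof -
        have "I \<ge> 0" unfolding I_def set_lebesgue_integral_def
          by (intro Bochner_Integration.integral_nonneg) (auto simp: h0 split: split_indicator)
        then show ?thesis using ab by (simp add: powr_divide)
      qed
      finally show ?thesis by (simp add: pwr)
    qed
  qed
  then show ?thesis using L by simp
qed


lemma iterate_bound:
  fixes f E :: "nat \<Rightarrow> real"
  assumes rec: "\<And>k. f k \<le> A * exp (E k) * 2^k * Q + (1/4) * exp (E k - E (Suc k)) * f (Suc k)"
    and f0: "\<And>k. 0 \<le> f k" and fF: "\<And>k. f k \<le> F" and E0: "\<And>k. E 0 \<le> E k"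
    and A: "A \<ge> 0" and Q: "Q \<ge> 0"
  shows "f 0 \<le> 2 * A * exp (E 0) * Q"
proof -
  define u where "u k = exp (- E k) * f k / 4^k" for k
  have ustep: "u k \<le> A * Q * (1/2)^k + u (Suc k)" for k
  proof -
    have "exp (- E k) / 4^k \<ge> 0" by simp
    from mult_left_mono[OF rec[of k] this]
    have "u k \<le> exp (- E k) / 4^k * (A * exp (E k) * 2^k * Q + (1/4) * exp (E k - E (Suc k)) * f (Suc k))"
      unfolding u_def by (simp add: field_simps)
    also have "\<dots> = A * Q * (2^k / 4^k) * (exp (- E k) * exp (E k))
         + exp (- E k) * exp (E k - E (Suc k)) * f (Suc k) / 4^(Suc k)"
      by (simp add: field_simps)
    also have "exp (- E k) * exp (E k) = 1" by (simp flip: exp_add)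
    also have "exp (- E k) * exp (E k - E (Suc k)) = exp (- E (Suc k))" by (simp flip: exp_add)
    also have "(2::real)^k / 4^k = (1/2)^k" by (simp add: power_divide[symmetric])
    finally show ?thesis unfolding u_def by simp
  qed
  have usum: "u 0 \<le> A * Q * (\<Sum>i<n. (1/2)^i) + u n" for n
  proof (induction n)
    case 0 then show ?case by simp
  next
    case (Suc n)
    then show ?case using ustep[of n] by (simp add: algebra_simps)
  qed
  have geo: "(\<Sum>i<n. (1/2::real)^i) \<le> 2" for n
  proof -
    have "(\<Sum>i<n. (1/2::real)^i) = 2 * (1 - (1/2)^n)"
      by (induction n) (simp_all add: algebra_simps)
    also have "\<dots> \<le> 2" by simp
    finally show ?thesis .
  qed
  define G where "G = exp (- E 0) * F"
  have un: "u n \<le> G * (1/4)^n" for n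
  proof -
    have "exp (- E n) * f n \<le> exp (- E 0) * F"
      using E0[of n] fF[of n] f0[of n] by (intro mult_mono) auto
    then have "exp (- E n) * f n / 4^n \<le> exp (- E 0) * F / 4^n" by (rule divide_right_mono) simp
    then show ?thesis unfolding u_def G_def by (simp add: power_one_over)
  qed
  have bound: "u 0 \<le> 2 * A * Q + G * (1/4)^n" for n
  proof -
    have "A * Q * (\<Sum>i<n. (1/2)^i) \<le> A * Q * 2" using A Q geo[of n] by (intro mult_left_mono) auto
    then show ?thesis using usum[of n] un[of n] by simp
  qed
  have lim: "(\<lambda>n. 2 * A * Q + G * (1/4::real)^n) \<longlonglongrightarrow> 2 * A * Q + G * 0"
    by (intro tendsto_intros LIMSEQ_power_zero) simp
  have "u 0 \<le> 2 * A * Q"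
    using LIMSEQ_le_const[OF lim, of "u 0"] bound by auto
  then have "exp (E 0) * u 0 \<le> exp (E 0) * (2 * A * Q)" by (rule mult_left_mono) simp
  moreover have "exp (E 0) * u 0 = f 0" unfolding u_def by (simp flip: exp_add)
  ultimately have "f 0 \<le> exp (E 0) * (2 * A * Q)" by simp
  also have "\<dots> = 2 * A * exp (E 0) * Q" by (simp add: mult_ac)
  finally show ?thesis .
qed

lemma C2_bound:
  fixes \<gamma>1 \<gamma>2 \<gamma>3 d1 d3 T :: real
  assumes pos: "\<gamma>1 > 0" "\<gamma>3 > 0" "d1 > 0" "d3 > 0" "T > 0" and lt: "\<gamma>1 < \<gamma>2"
  shows "d1 * exp (\<gamma>1 * ((ln 2 + \<gamma>1 * \<gamma>3 * ln 2 / (\<gamma>2 - \<gamma>1) + ln d1 - ln d3 - \<gamma>3 * ln (T / 4)) / (\<gamma>2 - \<gamma>1)))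
    \<le> 4 * (2 powr \<gamma>1 * (2 * 4 powr \<gamma>3) powr (\<gamma>1 * \<gamma>2 / (\<gamma>2 - \<gamma>1))
                   * d1 powr \<gamma>2 / d3 powr \<gamma>1) powr (1 / (\<gamma>2 - \<gamma>1)) / T powr (\<gamma>1 * \<gamma>3 / (\<gamma>2 - \<gamma>1))"
proof -
  define \<delta> where "\<delta> = \<gamma>2 - \<gamma>1"
  have d: "\<delta> > 0" using lt unfolding \<delta>_def by simp
  define l where "l = ln (2::real)"
  have l4: "ln (4::real) = 2 * l"
  proof -
    have "ln ((2::real)^2) = 2 * ln 2" by (subst ln_realpow) auto
    then show ?thesis unfolding l_def by simp
  qed
  have lT4: "ln (T / 4) = ln T - 2 * l" using pos l4 by (simp add: ln_div)
  define X1 where "X1 = ln d1 + \<gamma>1 * ((l + \<gamma>1 * \<gamma>3 * l / \<delta> + ln d1 - ln d3 - \<gamma>3 * (ln T - 2 * l)) / \<delta>)"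
  define X2 where "X2 = 2 * l + (\<gamma>1 * l + (\<gamma>1 * \<gamma>2 / \<delta>) * (l + \<gamma>3 * (2 * l)) + \<gamma>2 * ln d1 - \<gamma>1 * ln d3) / \<delta>
       - (\<gamma>1 * \<gamma>3 / \<delta>) * ln T"
  have LHS: "d1 * exp (\<gamma>1 * ((ln 2 + \<gamma>1 * \<gamma>3 * ln 2 / (\<gamma>2 - \<gamma>1) + ln d1 - ln d3 - \<gamma>3 * ln (T / 4)) / (\<gamma>2 - \<gamma>1))) = exp X1"
    unfolding X1_def using pos by (simp add: exp_add lT4 l_def \<delta>_def)
  define B where "B = 2 powr \<gamma>1 * (2 * 4 powr \<gamma>3) powr (\<gamma>1 * \<gamma>2 / \<delta>) * d1 powr \<gamma>2 / d3 powr \<gamma>1"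
  have B: "B = exp (\<gamma>1 * l + (\<gamma>1 * \<gamma>2 / \<delta>) * (l + \<gamma>3 * (2 * l)) + \<gamma>2 * ln d1 - \<gamma>1 * ln d3)"
  proof -
    have "2 * 4 powr \<gamma>3 = exp (l + \<gamma>3 * (2 * l))" unfolding l_def using l4 by (simp add: powr_def exp_add l_def)
    then have "(2 * 4 powr \<gamma>3) powr (\<gamma>1 * \<gamma>2 / \<delta>) = exp ((\<gamma>1 * \<gamma>2 / \<delta>) * (l + \<gamma>3 * (2 * l)))"
      by (simp add: exp_powr_real mult.commute)
    moreover have "(2::real) powr \<gamma>1 = exp (\<gamma>1 * l)" unfolding l_def by (simp add: powr_def mult.commute)
    moreover have "d1 powr \<gamma>2 = exp (\<gamma>2 * ln d1)" using pos by (simp add: powr_def mult.commute)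
    moreover have "d3 powr \<gamma>1 = exp (\<gamma>1 * ln d3)" using pos by (simp add: powr_def mult.commute)
    ultimately show ?thesis unfolding B_def by (simp add: exp_add exp_diff)
  qed
  have RHS: "4 * B powr (1 / \<delta>) / T powr (\<gamma>1 * \<gamma>3 / \<delta>) = exp X2"
  proof -
    have "B powr (1 / \<delta>) = exp ((\<gamma>1 * l + (\<gamma>1 * \<gamma>2 / \<delta>) * (l + \<gamma>3 * (2 * l)) + \<gamma>2 * ln d1 - \<gamma>1 * ln d3) / \<delta>)"
      unfolding B by (simp add: exp_powr_real)
    moreover have "T powr (\<gamma>1 * \<gamma>3 / \<delta>) = exp ((\<gamma>1 * \<gamma>3 / \<delta>) * ln T)" using pos by (simp add: powr_def mult.commute)
    moreover have "(4::real) = exp (2 * l)" using l4 by (metis exp_ln zero_less_numeral)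
    ultimately show ?thesis unfolding X2_def by (simp add: exp_add exp_diff)
  qed
  have diff: "X2 - X1 = l * (2 + \<gamma>1 * \<gamma>2 / \<delta>^2 + \<gamma>1^2 * \<gamma>3 / \<delta>^2)"
  proof -
    have g2: "\<gamma>2 = \<gamma>1 + \<delta>" unfolding \<delta>_def by simp
    show ?thesis unfolding X1_def X2_def g2 using d by (simp add: field_simps power2_eq_square)
  qed
  have "l > 0" unfolding l_def by simp
  moreover have "2 + \<gamma>1 * \<gamma>2 / \<delta>^2 + \<gamma>1^2 * \<gamma>3 / \<delta>^2 > 0" using pos lt d by (simp add: add_pos_nonneg)
  ultimately have "X1 \<le> X2" using diff by (smt (verit) mult_pos_pos)
  then show ?thesis unfolding LHS using RHS unfolding B_def \<delta>_def by simp
qed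

lemma C1_bound:
  fixes D a :: real
  assumes D: "D \<ge> 4" and a: "a \<ge> 0"
  shows "2 * D * exp a \<le> max (D powr (8 / (exp 1 * ln 2))) (exp (4 * a))"
proof -
  define c :: real where "c = 8 / (exp 1 * ln 2)"
  have c2: "c \<ge> 2"
  proof -
    have "exp 1 * ln 2 \<le> (3::real) * 1" using exp_le ln_2_less_1 by (intro mult_mono) auto
    moreover have "exp 1 * ln 2 > (0::real)" by simp
    ultimately show ?thesis unfolding c_def by (simp add: field_simps)
  qed
  have lD: "ln D \<ge> 2 * ln 2"
  proof -
    have "ln ((2::real)^2) = 2 * ln 2" by (subst ln_realpow) auto
    moreover have "ln (4::real) \<le> ln D" using D by simp
    ultimately show ?thesis by simp
  qed
  have l2: "ln 2 > (0::real)" by simp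
  have lD0: "ln D \<ge> 0" using lD l2 by linarith
  have cm: "c * ln D - 2 * ln D \<ge> 0" using mult_nonneg_nonneg[of "c - 2" "ln D"] c2 lD0 by (simp add: algebra_simps)
  have "ln 2 + ln D + a \<le> max (c * ln D) (4 * a)"
  proof (cases "4 * a \<le> c * ln D")
    case True
    have "ln 2 + ln D + a \<le> c * ln D" using True lD c2 l2 cm by linarith
    then show ?thesis by simp
  next
    case False
    have "ln 2 + ln D + a \<le> 4 * a" using False lD c2 l2 cm by linarith
    then show ?thesis by simp
  qed
  then have "exp (ln 2 + ln D + a) \<le> exp (max (c * ln D) (4 * a))" by simp
  also have "exp (ln 2 + ln D + a) = 2 * D * exp a" using D by (simp add: exp_add)
  also have "exp (max (c * ln D) (4 * a)) = max (D powr c) (exp (4 * a))"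
    using D by (simp add: powr_def max_def mult.commute)
  finally show ?thesis unfolding c_def .
qed

locale obs_set =
  fixes S :: "real \<Rightarrow> ('a::banach \<Rightarrow>\<^sub>L 'a)"
    and C :: "'a \<Rightarrow>\<^sub>L 'b::banach"
    and P :: "real \<Rightarrow> ('a \<Rightarrow>\<^sub>L 'a)"
    and M \<omega> lams d0 d1 \<gamma>1 d2 d3 \<gamma>2 \<gamma>3 T :: real
  assumes semigroup: "C0_semigroup S"
    and M_ge: "M \<ge> 1"
    and growth: "\<forall>t\<ge>0. norm (S t) \<le> M * exp (\<omega> * t)"
    and lam_nonneg: "lams \<ge> 0"
    and pos1: "d0 > 0" "d1 > 0" "\<gamma>1 > 0"
    and spectral: "\<forall>x. \<forall>lam>lams.
        norm (P lam x) \<le> d0 * exp (d1 * lam powr \<gamma>1) * norm (C (P lam x))"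
    and pos2: "d2 \<ge> 1" "d3 > 0" "\<gamma>2 > 0" "\<gamma>3 > 0" "T > 0"
    and gam_lt: "\<gamma>1 < \<gamma>2"
    and dissip: "\<forall>x. \<forall>lam>lams. \<forall>t\<in>{0<..T/2}.
        norm (S t x - P lam (S t x)) \<le> d2 * exp (- d3 * lam powr \<gamma>2 * t powr \<gamma>3) * norm x"
begin

definition "wp = max \<omega> 0"

lemma wp_nonneg: "wp \<ge> 0" unfolding wp_def by simp

lemma law: "0 \<le> t \<Longrightarrow> 0 \<le> s \<Longrightarrow> S (t + s) = S t o\<^sub>L S s"
  using semigroup unfolding C0_semigroup_def by blast

lemma normS: assumes "0 \<le> t" "t \<le> u" shows "norm (S t) \<le> M * exp (wp * u)"
proof -
  have "norm (S t) \<le> M * exp (\<omega> * t)" using growth assms by auto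
  also have "\<omega> * t \<le> wp * u"
  proof -
    have "\<omega> * t \<le> wp * t" unfolding wp_def by (rule mult_right_mono) (use assms in auto)
    also have "\<dots> \<le> wp * u" by (rule mult_left_mono) (use assms wp_nonneg in auto)
    finally show ?thesis .
  qed
  then have "M * exp (\<omega> * t) \<le> M * exp (wp * u)" using M_ge by simp
  finally show ?thesis .
qed

lemma normSx: assumes "0 \<le> t" "t \<le> u" shows "norm (S t z) \<le> M * exp (wp * u) * norm z"
proof -
  have "norm (S t z) \<le> norm (S t) * norm z" by (rule norm_blinfun)
  also have "\<dots> \<le> M * exp (wp * u) * norm z" by (rule mult_right_mono[OF normS[OF assms]]) simp
  finally show ?thesis .
qed

lemma step_pointwise:
  assumes ab: "0 \<le> a" "a < b" "b \<le> T" and lam: "lam > lams"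
    and s: "a + (b - a) / 2 < s" "s < b"
  shows "norm (S b x) \<le> M * d0 * exp (wp * ((b - a) / 2)) * exp (d1 * lam powr \<gamma>1) * norm (C (S s x))
     + M\<^sup>2 * d2 * (d0 * norm C + 1) * exp (wp * (b - a))
        * exp (d1 * lam powr \<gamma>1 - d3 * lam powr \<gamma>2 * ((b - a) / 2) powr \<gamma>3) * norm (S a x)"
proof -
  define \<tau> where "\<tau> = b - a"
  define y where "y = S s x"
  define z where "z = S (s - a - \<tau>/2) (S a x)"
  define E where "E = d1 * lam powr \<gamma>1"
  define G where "G = d3 * lam powr \<gamma>2 * (\<tau> / 2) powr \<gamma>3"
  define R where "R = norm (y - P lam y)"
  have tau: "\<tau> > 0" using ab unfolding \<tau>_def by simp
  have h1: "norm (S b x) \<le> M * exp (wp * (\<tau>/2)) * norm y"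
  proof -
    have "0 \<le> s" using s ab by (simp add: field_simps)
    then have "S b = S (b - s) o\<^sub>L S s" using law[of "b - s" s] s by simp
    then have "S b x = S (b - s) y" unfolding y_def by simp
    moreover have "b - s \<le> \<tau>/2" using s unfolding \<tau>_def by (simp add: field_simps)
    ultimately show ?thesis using normSx[of "b - s" "\<tau>/2" y] s by simp
  qed
  have q1: "s - a - \<tau>/2 \<ge> 0" using s unfolding \<tau>_def by (simp add: field_simps)
  have q2: "(s - a - \<tau>/2) + a \<ge> 0" using q1 ab by linarith
  have q3: "\<tau>/2 \<ge> 0" using tau by simp
  have q4: "s - a - \<tau>/2 \<le> \<tau>/2" using s unfolding \<tau>_def by (simp add: field_simps)
  have yz: "y = S (\<tau>/2) z"
  proof -
    have "S (\<tau>/2 + ((s - a - \<tau>/2) + a)) = S (\<tau>/2) o\<^sub>L S ((s - a - \<tau>/2) + a)" by (rule law[OF q3 q2])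
    then have "S s = S (\<tau>/2) o\<^sub>L S ((s - a - \<tau>/2) + a)" by simp
    also have "S ((s - a - \<tau>/2) + a) = S (s - a - \<tau>/2) o\<^sub>L S a" by (rule law[OF q1 ab(1)])
    finally show ?thesis unfolding y_def z_def by simp
  qed
  have hz: "norm z \<le> M * exp (wp * (\<tau>/2)) * norm (S a x)"
    unfolding z_def by (rule normSx[OF q1 q4])
  have hR: "R \<le> d2 * exp (- G) * (M * exp (wp * (\<tau>/2)) * norm (S a x))"
  proof -
    have "\<tau>/2 \<in> {0<..T/2}" using tau ab unfolding \<tau>_def by auto
    then have "R \<le> d2 * exp (- d3 * lam powr \<gamma>2 * (\<tau>/2) powr \<gamma>3) * norm z"
      using dissip lam unfolding R_def yz by blast
    also have "\<dots> \<le> d2 * exp (- G) * (M * exp (wp * (\<tau>/2)) * norm (S a x))"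
      unfolding G_def using hz pos2(1) by (simp add: mult_left_mono)
    finally show ?thesis .
  qed
  have hy: "norm y \<le> d0 * exp E * norm (C y) + (d0 * norm C + 1) * exp E * R"
  proof -
    have "norm y \<le> norm (P lam y) + R" unfolding R_def
      using norm_triangle_ineq[of "P lam y" "y - P lam y"] by simp
    also have "norm (P lam y) \<le> d0 * exp E * norm (C (P lam y))" using spectral lam unfolding E_def by blast
    also have "norm (C (P lam y)) \<le> norm (C y) + norm C * R"
    proof -
      have "C (P lam y) = C y - C (y - P lam y)" by (simp add: blinfun.diff_right)
      then have "norm (C (P lam y)) \<le> norm (C y) + norm (C (y - P lam y))"
        using norm_triangle_ineq4 by metis
      also have "norm (C (y - P lam y)) \<le> norm C * R" unfolding R_def by (rule norm_blinfun)
      finally show ?thesis by simp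
    qed
    then have "d0 * exp E * norm (C (P lam y)) \<le> d0 * exp E * (norm (C y) + norm C * R)"
      using pos1 by (intro mult_left_mono) auto
    finally have "norm y \<le> d0 * exp E * norm (C y) + (d0 * exp E * norm C + 1) * R"
      by (simp add: algebra_simps)
    also have "(d0 * exp E * norm C + 1) * R \<le> (d0 * norm C + 1) * exp E * R"
    proof (rule mult_right_mono)
      have "1 \<le> exp E" unfolding E_def using pos1 by simp
      then show "d0 * exp E * norm C + 1 \<le> (d0 * norm C + 1) * exp E" by (simp add: algebra_simps)
      show "0 \<le> R" unfolding R_def by simp
    qed
    finally show ?thesis by simp
  qed
  define W where "W = M * exp (wp * (\<tau>/2))"
  have W0: "W \<ge> 0" unfolding W_def using M_ge by simp
  have "norm (S b x) \<le> W * norm y" using h1 unfolding W_def .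
  also have "\<dots> \<le> W * (d0 * exp E * norm (C y) + (d0 * norm C + 1) * exp E * (d2 * exp (- G) * (W * norm (S a x))))"
  proof (rule mult_left_mono[OF _ W0])
    have "(d0 * norm C + 1) * exp E * R \<le> (d0 * norm C + 1) * exp E * (d2 * exp (- G) * (W * norm (S a x)))"
      using hR pos1 unfolding W_def by (intro mult_left_mono) auto
    then show "norm y \<le> d0 * exp E * norm (C y) + (d0 * norm C + 1) * exp E * (d2 * exp (- G) * (W * norm (S a x)))"
      using hy by linarith
  qed
  also have "\<dots> = M * d0 * exp (wp * (\<tau> / 2)) * exp E * norm (C y)
     + M\<^sup>2 * d2 * (d0 * norm C + 1) * (exp (wp * (\<tau>/2)) * exp (wp * (\<tau>/2))) * (exp E * exp (- G)) * norm (S a x)"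
    unfolding W_def by (simp add: algebra_simps power2_eq_square)
  also have "exp (wp * (\<tau>/2)) * exp (wp * (\<tau>/2)) = exp (wp * \<tau>)" by (simp flip: exp_add)
  also have "exp E * exp (- G) = exp (E - G)" by (simp flip: exp_add)
  finally show ?thesis unfolding \<tau>_def E_def G_def y_def .
qed


lemma step_obs:
  assumes H: "\<And>\<alpha> \<beta> V. 0 \<le> \<alpha> \<Longrightarrow> \<alpha> < \<beta> \<Longrightarrow> \<beta> \<le> T \<Longrightarrow>
         (\<forall>s\<in>{\<alpha><..<\<beta>}. V \<le> norm (C (S s x))) \<Longrightarrow> V \<le> (1/(\<beta>-\<alpha>)) powr p * Q"
    and ab: "0 \<le> a" "a < b" "b \<le> T" and lam: "lam > lams"
  shows "norm (S b x) \<le> M * d0 * exp (wp * ((b - a) / 2)) * exp (d1 * lam powr \<gamma>1) * ((2 / (b - a)) powr p * Q)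
     + M\<^sup>2 * d2 * (d0 * norm C + 1) * exp (wp * (b - a))
        * exp (d1 * lam powr \<gamma>1 - d3 * lam powr \<gamma>2 * ((b - a) / 2) powr \<gamma>3) * norm (S a x)"
proof -
  define K1 where "K1 = M * d0 * exp (wp * ((b - a) / 2)) * exp (d1 * lam powr \<gamma>1)"
  define K2 where "K2 = M\<^sup>2 * d2 * (d0 * norm C + 1) * exp (wp * (b - a))
        * exp (d1 * lam powr \<gamma>1 - d3 * lam powr \<gamma>2 * ((b - a) / 2) powr \<gamma>3)"
  have K1: "K1 > 0" unfolding K1_def using M_ge pos1 by simp
  define V where "V = (norm (S b x) - K2 * norm (S a x)) / K1"
  have a1: "0 \<le> a + (b - a) / 2" using ab by simp
  have a2: "a + (b - a) / 2 < b" using ab by (simp add: field_simps)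
  have "V \<le> (1 / (b - (a + (b - a) / 2))) powr p * Q"
  proof (rule H[OF a1 a2 ab(3)], intro ballI)
    fix s assume "s \<in> {a + (b - a) / 2<..<b}"
    then have s: "a + (b - a) / 2 < s" "s < b" by auto
    have "norm (S b x) \<le> K1 * norm (C (S s x)) + K2 * norm (S a x)"
      using step_pointwise[OF ab lam s, of x] unfolding K1_def K2_def by simp
    then show "V \<le> norm (C (S s x))" unfolding V_def using K1 by (simp add: field_simps)
  qed
  also have "1 / (b - (a + (b - a) / 2)) = 2 / (b - a)" by (simp add: field_simps)
  finally have "V \<le> (2 / (b - a)) powr p * Q" .
  then have "K1 * V \<le> K1 * ((2 / (b - a)) powr p * Q)" using K1 by simp
  moreover have "K1 * V = norm (S b x) - K2 * norm (S a x)" unfolding V_def using K1 by simp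
  ultimately show ?thesis unfolding K1_def[symmetric] K2_def[symmetric] by simp
qed


lemma params:
  fixes l \<delta> D L la lL ll l0 :: real and lamk E :: "nat \<Rightarrow> real"
  assumes l_def: "l = ln 2"
  assumes \<delta>_def: "\<delta> = \<gamma>2 - \<gamma>1"
  assumes D_def: "D = (4 * d2 * M\<^sup>2) * (d0 * norm C + 1)"
  assumes L_def: "L = ln D + wp * T"
  assumes la_def: "la = (ln 2 + \<gamma>1 * \<gamma>3 * ln 2 / (\<gamma>2 - \<gamma>1) + ln d1 - ln d3 - \<gamma>3 * ln (T / 4)) / (\<gamma>2 - \<gamma>1)"
  assumes lL_def: "lL = (ln L - ln d1) / \<gamma>1"
  assumes ll_def: "ll = (if lams > 0 then ln (2 * lams) else la)"
  assumes l0_def: "l0 = max la (max lL ll)"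
  assumes lamk_def: "lamk = (\<lambda>k::nat. exp (l0 + real k * \<gamma>3 * l / \<delta>))"
  assumes E_def: "E = (\<lambda>k. d1 * lamk k powr \<gamma>1)"
  shows "D \<ge> 4" "L > 0" "\<And>k. lamk k > lams" "\<And>k. E 0 \<le> E k" "E 0 \<ge> L"
    "\<And>k. d3 * lamk k powr \<gamma>2 * (T / 2^(k+2)) powr \<gamma>3 \<ge> 2 * E (Suc k)"
    "E 0 \<le> d1 * exp (\<gamma>1 * la) + L + d1 * (2 * lams) powr \<gamma>1"
proof -
  have d: "\<delta> > 0" unfolding \<delta>_def using gam_lt by simp
  have l: "l > 0" unfolding l_def by simp
  show D4: "D \<ge> 4"
  proof -
    have "1 \<le> M\<^sup>2" using M_ge by (simp add: one_le_power)
    then have "1 \<le> d2 * M\<^sup>2" using pos2(1) by (metis mult_mono' mult_1_left zero_le_one)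
    moreover have "1 \<le> d0 * norm C + 1" using pos1 by simp
    ultimately have "1 \<le> (d2 * M\<^sup>2) * (d0 * norm C + 1)" by (metis mult_mono' mult_1_left zero_le_one)
    then show ?thesis unfolding D_def by simp
  qed
  have lnD: "ln D > 0" using D4 by simp
  show L0: "L > 0" unfolding L_def using lnD wp_nonneg pos2(5) by (simp add: add_pos_nonneg)
  have Ek: "E k = d1 * exp (\<gamma>1 * (l0 + real k * \<gamma>3 * l / \<delta>))" for k
    unfolding E_def lamk_def by (simp add: exp_powr_real mult.commute)
  show mono: "E 0 \<le> E k" for k
  proof -
    have "real k * \<gamma>3 * l / \<delta> \<ge> 0" using pos2 l d by simp
    then have "\<gamma>1 * l0 \<le> \<gamma>1 * (l0 + real k * \<gamma>3 * l / \<delta>)" using pos1 by (simp add: mult_left_mono)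
    then show ?thesis unfolding Ek using pos1 by simp
  qed
  show "lamk k > lams" for k
  proof -
    have "real k * \<gamma>3 * l / \<delta> \<ge> 0" using pos2 l d by simp
    then have "exp l0 \<le> lamk k" unfolding lamk_def by simp
    moreover have "exp l0 > lams"
    proof (cases "lams > 0")
      case True
      then have "exp ll = 2 * lams" unfolding ll_def by simp
      moreover have "ll \<le> l0" unfolding l0_def by simp
      ultimately have "exp l0 \<ge> 2 * lams" by (metis exp_le_cancel_iff)
      then show ?thesis using True by simp
    next
      case False
      then show ?thesis using lam_nonneg by (smt (verit) exp_gt_zero)
    qed
    ultimately show ?thesis by simp
  qed
  have EL: "d1 * exp (\<gamma>1 * lL) = L"
  proof -
    have "\<gamma>1 * lL = ln L - ln d1" unfolding lL_def using pos1 by simp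
    then show ?thesis using pos1 L0 by (simp add: exp_diff)
  qed
  show "E 0 \<ge> L"
  proof -
    have "lL \<le> l0" unfolding l0_def by simp
    then have "d1 * exp (\<gamma>1 * lL) \<le> d1 * exp (\<gamma>1 * l0)" using pos1 by simp
    then show ?thesis using EL Ek[of 0] by simp
  qed
  show "E 0 \<le> d1 * exp (\<gamma>1 * la) + L + d1 * (2 * lams) powr \<gamma>1"
  proof -
    have nn: "0 \<le> d1 * exp (\<gamma>1 * la)" "0 \<le> L" "0 \<le> d1 * (2 * lams) powr \<gamma>1" using pos1 L0 by auto
    have E0: "E 0 = d1 * exp (\<gamma>1 * l0)" using Ek[of 0] by simp
    have "l0 = la \<or> l0 = lL \<or> l0 = ll" unfolding l0_def by linarith
    then show ?thesis
    proof (elim disjE)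
      assume "l0 = la" then show ?thesis using E0 nn by simp
    next
      assume "l0 = lL" then show ?thesis using E0 nn EL by simp
    next
      assume h: "l0 = ll"
      show ?thesis
      proof (cases "lams > 0")
        case True
        then have "d1 * exp (\<gamma>1 * ll) = d1 * (2 * lams) powr \<gamma>1"
          unfolding ll_def by (simp add: powr_def mult.commute)
        then have "E 0 = d1 * (2 * lams) powr \<gamma>1" using E0 h by simp
        then show ?thesis using nn by simp
      next
        case False
        then show ?thesis using E0 nn h unfolding ll_def by simp
      qed
    qed
  qed
  show "d3 * lamk k powr \<gamma>2 * (T / 2^(k+2)) powr \<gamma>3 \<ge> 2 * E (Suc k)" for k
  proof -
    have p2: "ln ((2::real)^(k+2)) = real (k+2) * l" unfolding l_def by (rule ln_realpow)
    have lnT: "ln (T / 2^(k+2)) = ln T - real (k+2) * l"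
      unfolding ln_div p2 using pos2(5) by simp
    have lnT4: "ln (T / 4) = ln T - 2 * l"
    proof -
      have "ln ((2::real)^2) = 2 * l" unfolding l_def by (subst ln_realpow) auto
      then show ?thesis using pos2(5) by (simp add: ln_div)
    qed
    have G: "d3 * lamk k powr \<gamma>2 * (T / 2^(k+2)) powr \<gamma>3
        = exp (ln d3 + \<gamma>2 * (l0 + real k * \<gamma>3 * l / \<delta>) + \<gamma>3 * (ln T - real (k+2) * l))"
    proof -
      have "(T / 2^(k+2)) powr \<gamma>3 = exp (\<gamma>3 * (ln T - real (k+2) * l))"
        using pos2(5) lnT by (simp add: powr_def mult.commute)
      moreover have "lamk k powr \<gamma>2 = exp (\<gamma>2 * (l0 + real k * \<gamma>3 * l / \<delta>))"
        unfolding lamk_def by (simp add: exp_powr_real mult.commute)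
      ultimately show ?thesis using pos2(2) by (simp add: exp_add)
    qed
    have E2: "2 * E (Suc k) = exp (l + ln d1 + \<gamma>1 * (l0 + real (Suc k) * \<gamma>3 * l / \<delta>))"
      unfolding Ek using pos1 by (simp add: exp_add l_def)
    have la_eq: "\<delta> * la = l + \<gamma>1 * \<gamma>3 * l / \<delta> + ln d1 - ln d3 - \<gamma>3 * (ln T - 2 * l)"
      unfolding la_def lnT4 using d unfolding \<delta>_def l_def by simp
    have "\<delta> * la \<le> \<delta> * l0" unfolding l0_def using d by (simp add: mult_left_mono)
    have g2: "\<gamma>2 = \<gamma>1 + \<delta>" unfolding \<delta>_def by simp
    have ident: "(ln d3 + \<gamma>2 * (l0 + real k * \<gamma>3 * l / \<delta>) + \<gamma>3 * (ln T - real (k+2) * l))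
       - (l + ln d1 + \<gamma>1 * (l0 + real (Suc k) * \<gamma>3 * l / \<delta>))
       = \<delta> * l0 - (l + \<gamma>1 * \<gamma>3 * l / \<delta> + ln d1 - ln d3 - \<gamma>3 * (ln T - 2 * l))"
      unfolding g2 using d by (simp add: field_simps)
    have "l + ln d1 + \<gamma>1 * (l0 + real (Suc k) * \<gamma>3 * l / \<delta>)
        \<le> ln d3 + \<gamma>2 * (l0 + real k * \<gamma>3 * l / \<delta>) + \<gamma>3 * (ln T - real (k+2) * l)"
      using ident la_eq \<open>\<delta> * la \<le> \<delta> * l0\<close> by linarith
    then show ?thesis unfolding G E2 by simp
  qed
qed


lemma main_real:
  assumes Q: "Q \<ge> 0" and p: "0 \<le> p" "p \<le> 1"
    and H: "\<And>\<alpha> \<beta> V. 0 \<le> \<alpha> \<Longrightarrow> \<alpha> < \<beta> \<Longrightarrow> \<beta> \<le> T \<Longrightarrow>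
         (\<forall>s\<in>{\<alpha><..<\<beta>}. V \<le> norm (C (S s x))) \<Longrightarrow> V \<le> (1/(\<beta>-\<alpha>)) powr p * Q"
  shows "norm (S T x) \<le>
     (4 * M * d0) * max (((4 * d2 * M\<^sup>2) * (d0 * norm C + 1)) powr (8 / (exp 1 * ln 2)))
                                 (exp (4 * d1 * (2 * lams) powr \<gamma>1))
     / T powr p * exp (4 * (2 powr \<gamma>1 * (2 * 4 powr \<gamma>3) powr (\<gamma>1 * \<gamma>2 / (\<gamma>2 - \<gamma>1))
                   * d1 powr \<gamma>2 / d3 powr \<gamma>1) powr (1 / (\<gamma>2 - \<gamma>1)) / T powr (\<gamma>1 * \<gamma>3 / (\<gamma>2 - \<gamma>1))
          + max \<omega> 0 * (1 + 10 / (exp 1 * ln 2)) * T) * Q"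
proof -
  define l where "l = ln (2::real)"
  define \<delta> where "\<delta> = \<gamma>2 - \<gamma>1"
  define D where "D = (4 * d2 * M\<^sup>2) * (d0 * norm C + 1)"
  define L where "L = ln D + wp * T"
  define la where "la = (ln 2 + \<gamma>1 * \<gamma>3 * ln 2 / (\<gamma>2 - \<gamma>1) + ln d1 - ln d3 - \<gamma>3 * ln (T / 4)) / (\<gamma>2 - \<gamma>1)"
  define lL where "lL = (ln L - ln d1) / \<gamma>1"
  define ll where "ll = (if lams > 0 then ln (2 * lams) else la)"
  define l0 where "l0 = max la (max lL ll)"
  define lamk where "lamk = (\<lambda>k::nat. exp (l0 + real k * \<gamma>3 * l / \<delta>))"
  define E where "E = (\<lambda>k. d1 * lamk k powr \<gamma>1)"
  note P = params[OF l_def \<delta>_def D_def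
     L_def la_def lL_def
     ll_def l0_def lamk_def E_def]
  define f where "f = (\<lambda>k::nat. norm (S (T / 2^k) x))"
  define A where "A = 4 * M * d0 * exp (wp * T / 4)"
  define Q' where "Q' = Q / T powr p"
  define F where "F = M * exp (wp * T) * norm x"
  have T: "T > 0" using pos2(5) .
  have A0: "A \<ge> 0" unfolding A_def using M_ge pos1 by simp
  have Q'0: "Q' \<ge> 0" unfolding Q'_def using Q by simp
  have rec: "f k \<le> A * exp (E k) * 2^k * Q' + (1/4) * exp (E k - E (Suc k)) * f (Suc k)" for k
  proof -
    define a where "a = T / 2^(Suc k)"
    define b where "b = T / 2^k"
    have ab: "0 \<le> a" "a < b" "b \<le> T" unfolding a_def b_def using T
      by (auto simp: field_simps)
    have ba: "b - a = T / 2^(Suc k)" unfolding a_def b_def by (simp add: field_simps)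
    have ba2: "(b - a) / 2 = T / 2^(k+2)" unfolding ba by (simp add: field_simps)
    have ba3: "2 / (b - a) = 2^(k+2) / T" unfolding ba using T by (simp add: field_simps)
    have st: "f k \<le> M * d0 * exp (wp * ((b - a) / 2)) * exp (E k) * ((2 / (b - a)) powr p * Q)
       + M\<^sup>2 * d2 * (d0 * norm C + 1) * exp (wp * (b - a))
        * exp (E k - d3 * lamk k powr \<gamma>2 * ((b - a) / 2) powr \<gamma>3) * f (Suc k)"
      using step_obs[OF H ab P(3)[of k]] unfolding f_def E_def a_def b_def by simp
    have t1: "M * d0 * exp (wp * ((b - a) / 2)) * exp (E k) * ((2 / (b - a)) powr p * Q)
        \<le> A * exp (E k) * 2^k * Q'"
    proof -
      have "T / 2^(k+2) \<le> T / 4"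
      proof -
        have "(4::real) \<le> 2^(k+2)" by (simp add: power_add)
        then show ?thesis using T by (intro divide_left_mono) auto
      qed
      then have "wp * (T / 2^(k+2)) \<le> wp * (T / 4)" by (rule mult_left_mono[OF _ wp_nonneg])
      then have e1: "exp (wp * ((b - a) / 2)) \<le> exp (wp * T / 4)"
        unfolding ba2 by simp
      have e2: "(2 / (b - a)) powr p \<le> 4 * 2^k / T powr p"
      proof -
        have "(2 / (b - a)) powr p = (2^(k+2)) powr p / T powr p" unfolding ba3 using T by (simp add: powr_divide)
        also have "((2::real)^(k+2)) powr p \<le> (2^(k+2)) powr 1"
          using p one_le_power[of "2::real" "k+2"] by (intro powr_mono) auto
        then have "((2::real)^(k+2)) powr p / T powr p \<le> 2^(k+2) / T powr p"
          using T by (simp add: divide_right_mono)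
        finally show ?thesis by (simp add: power_add)
      qed
      have "M * d0 * exp (wp * ((b - a) / 2)) * exp (E k) * ((2 / (b - a)) powr p * Q)
          \<le> M * d0 * exp (wp * T / 4) * exp (E k) * (4 * 2^k / T powr p * Q)"
        using e1 e2 M_ge pos1 Q by (intro mult_mono mult_right_mono) auto
      also have "\<dots> = A * exp (E k) * 2^k * Q'" unfolding A_def Q'_def by (simp add: field_simps)
      finally show ?thesis .
    qed
    have t2: "M\<^sup>2 * d2 * (d0 * norm C + 1) * exp (wp * (b - a))
        * exp (E k - d3 * lamk k powr \<gamma>2 * ((b - a) / 2) powr \<gamma>3) \<le> (1/4) * exp (E k - E (Suc k))"
    proof -
      have G: "d3 * lamk k powr \<gamma>2 * ((b - a) / 2) powr \<gamma>3 \<ge> E (Suc k) + L"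
        using P(6)[of k] P(4)[of "Suc k"] P(5) unfolding ba2 by linarith
      have "b - a \<le> T" using ab by linarith
      then have "wp * (b - a) \<le> wp * T" using wp_nonneg by (rule mult_left_mono)
      then have "exp (wp * (b - a)) \<le> exp (wp * T)" by simp
      moreover have "exp (E k - d3 * lamk k powr \<gamma>2 * ((b - a) / 2) powr \<gamma>3) \<le> exp (E k - E (Suc k) - L)"
        using G by simp
      ultimately have "M\<^sup>2 * d2 * (d0 * norm C + 1) * exp (wp * (b - a))
        * exp (E k - d3 * lamk k powr \<gamma>2 * ((b - a) / 2) powr \<gamma>3)
        \<le> M\<^sup>2 * d2 * (d0 * norm C + 1) * exp (wp * T) * exp (E k - E (Suc k) - L)"
        using M_ge pos1 pos2 by (intro mult_mono mult_left_mono) auto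
      also have "\<dots> = (1/4) * exp (E k - E (Suc k)) * (D * exp (wp * T) * exp (- L))"
        unfolding D_def by (simp add: exp_diff exp_minus exp_add field_simps)
      also have "D * exp (wp * T) * exp (- L) = 1"
      proof -
        have eL: "exp L = D * exp (wp * T)" unfolding L_def using P(1) by (simp add: exp_add)
        show ?thesis unfolding exp_minus eL using P(1) by (simp add: field_simps)
      qed
      finally show ?thesis by simp
    qed
    have fs: "0 \<le> f (Suc k)" unfolding f_def by simp
    show ?thesis using st t1 mult_right_mono[OF t2 fs] by linarith
  qed
  have f0: "0 \<le> f k" for k unfolding f_def by simp
  have fF: "f k \<le> F" for k
  proof -
    have "T / 2^k \<le> T" using T by (simp add: field_simps one_le_power)
    then show ?thesis unfolding f_def F_def using T by (intro normSx) auto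
  qed
  have main: "f 0 \<le> 2 * A * exp (E 0) * Q'"
    by (rule iterate_bound[OF rec f0 fF P(4) A0 Q'0])
  define a' where "a' = d1 * (2 * lams) powr \<gamma>1"
  define Ea where "Ea = d1 * exp (\<gamma>1 * la)"
  define C1 where "C1 = (4 * M * d0) * max (((4 * d2 * M\<^sup>2) * (d0 * norm C + 1)) powr (8 / (exp 1 * ln 2)))
                                 (exp (4 * d1 * (2 * lams) powr \<gamma>1))"
  define C2 where "C2 = 4 * (2 powr \<gamma>1 * (2 * 4 powr \<gamma>3) powr (\<gamma>1 * \<gamma>2 / (\<gamma>2 - \<gamma>1))
                   * d1 powr \<gamma>2 / d3 powr \<gamma>1) powr (1 / (\<gamma>2 - \<gamma>1))"
  define C3 where "C3 = max \<omega> 0 * (1 + 10 / (exp 1 * ln 2))"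
  have a'0: "a' \<ge> 0" unfolding a'_def using pos1 by simp
  have Ea: "Ea \<le> C2 / T powr (\<gamma>1 * \<gamma>3 / (\<gamma>2 - \<gamma>1))"
    unfolding Ea_def C2_def la_def using C2_bound[OF pos1(3) pos2(4) pos1(2) pos2(2) pos2(5) gam_lt] .
  have C3: "(5/4) * wp \<le> C3"
  proof -
    have "exp 1 * ln 2 \<le> (3::real) * 1" using exp_le ln_2_less_1 by (intro mult_mono) auto
    moreover have "exp 1 * ln 2 > (0::real)" by simp
    ultimately have "10 / (exp 1 * ln 2) \<ge> (1/4::real)" by (simp add: field_simps)
    then have "(5/4::real) \<le> 1 + 10 / (exp 1 * ln 2)" by simp
    then have "wp * (5/4) \<le> wp * (1 + 10 / (exp 1 * ln 2))" by (rule mult_left_mono[OF _ wp_nonneg])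
    then show ?thesis unfolding C3_def wp_def by simp
  qed
  have E0b: "exp (E 0) \<le> exp Ea * (D * exp (wp * T)) * exp a'"
  proof -
    have "exp (E 0) \<le> exp (Ea + L + a')" using P(7) unfolding Ea_def a'_def by simp
    also have "\<dots> = exp Ea * exp L * exp a'" by (simp add: exp_add)
    also have "exp L = D * exp (wp * T)" unfolding L_def using P(1) by (simp add: exp_add)
    finally show ?thesis .
  qed
  have X: "8 * M * d0 * exp (wp * T / 4) * exp (E 0) \<le> C1 * exp (C2 / T powr (\<gamma>1 * \<gamma>3 / (\<gamma>2 - \<gamma>1)) + C3 * T)"
  proof -
    have "8 * M * d0 * exp (wp * T / 4) * exp (E 0) \<le> 8 * M * d0 * exp (wp * T / 4) * (exp Ea * (D * exp (wp * T)) * exp a')"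
      using E0b M_ge pos1 by (intro mult_left_mono) auto
    also have "\<dots> = (4 * M * d0) * (2 * D * exp a') * exp (Ea + (5/4) * wp * T)"
    proof -
      have ee: "exp (Ea + (5/4) * wp * T) = exp Ea * exp (wp * T / 4) * exp (wp * T)"
        by (simp add: algebra_simps flip: exp_add)
      show ?thesis unfolding ee by (simp add: mult_ac)
    qed
    also have "\<dots> \<le> C1 * exp (C2 / T powr (\<gamma>1 * \<gamma>3 / (\<gamma>2 - \<gamma>1)) + C3 * T)"
    proof -
      have "2 * D * exp a' \<le> max (D powr (8 / (exp 1 * ln 2))) (exp (4 * a'))"
        by (rule C1_bound[OF P(1) a'0])
      then have c1: "(4 * M * d0) * (2 * D * exp a') \<le> C1"
        unfolding C1_def D_def a'_def using M_ge pos1 by (simp add: mult_left_mono mult.assoc)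
      have "(5/4) * wp * T \<le> C3 * T" using C3 T by (simp add: mult_right_mono)
      then have c2: "exp (Ea + (5/4) * wp * T) \<le> exp (C2 / T powr (\<gamma>1 * \<gamma>3 / (\<gamma>2 - \<gamma>1)) + C3 * T)"
        using Ea by simp
      have "0 \<le> (4 * M * d0) * (2 * D * exp a')" using M_ge pos1 P(1) by simp
      then have "0 \<le> C1" using c1 by linarith
      then show ?thesis using c1 c2 by (intro mult_mono) auto
    qed
    finally show ?thesis .
  qed
  have "norm (S T x) = f 0" unfolding f_def by simp
  also have "\<dots> \<le> 2 * A * exp (E 0) * Q'" by (rule main)
  also have "\<dots> = (8 * M * d0 * exp (wp * T / 4) * exp (E 0)) * (Q / T powr p)"
    unfolding A_def Q'_def by (simp add: field_simps)
  also have "\<dots> \<le> (C1 * exp (C2 / T powr (\<gamma>1 * \<gamma>3 / (\<gamma>2 - \<gamma>1)) + C3 * T)) * (Q / T powr p)"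
    using X Q T by (intro mult_right_mono) auto
  also have "\<dots> = C1 / T powr p * exp (C2 / T powr (\<gamma>1 * \<gamma>3 / (\<gamma>2 - \<gamma>1)) + C3 * T) * Q"
    by (simp add: field_simps)
  finally show ?thesis unfolding C1_def C2_def C3_def .
qed

end

theorem theorem2p1:
  fixes S :: "real \<Rightarrow> ('a::banach \<Rightarrow>\<^sub>L 'a)"
    and C :: "'a \<Rightarrow>\<^sub>L 'b::banach"
    and P :: "real \<Rightarrow> ('a \<Rightarrow>\<^sub>L 'a)"
    and M \<omega> lams d0 d1 \<gamma>1 d2 d3 \<gamma>2 \<gamma>3 T :: real
  assumes semigroup: "C0_semigroup S"
    and M_ge: "M \<ge> 1"
    and growth: "\<forall>t\<ge>0. norm (S t) \<le> M * exp (\<omega> * t)"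
    and lam_nonneg: "lams \<ge> 0"
    and pos1: "d0 > 0" "d1 > 0" "\<gamma>1 > 0"
    and spectral: "\<forall>x. \<forall>lam>lams.
        norm (P lam x) \<le> d0 * exp (d1 * lam powr \<gamma>1) * norm (C (P lam x))"
    and pos2: "d2 \<ge> 1" "d3 > 0" "\<gamma>2 > 0" "\<gamma>3 > 0" "T > 0"
    and gam_lt: "\<gamma>1 < \<gamma>2"
    and dissip: "\<forall>x. \<forall>lam>lams. \<forall>t\<in>{0<..T/2}.
        norm (S t x - P lam (S t x)) \<le> d2 * exp (- d3 * lam powr \<gamma>2 * t powr \<gamma>3) * norm x"
  shows "\<forall>r::ereal. 1 \<le> r \<longrightarrow> (\<forall>x.
     let C1 = (4 * M * d0) * max (((4 * d2 * M\<^sup>2) * (d0 * norm C + 1)) powr (8 / (exp 1 * ln 2)))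
                                 (exp (4 * d1 * (2 * lams) powr \<gamma>1));
         C2 = 4 * (2 powr \<gamma>1 * (2 * 4 powr \<gamma>3) powr (\<gamma>1 * \<gamma>2 / (\<gamma>2 - \<gamma>1))
                   * d1 powr \<gamma>2 / d3 powr \<gamma>1) powr (1 / (\<gamma>2 - \<gamma>1));
         C3 = max \<omega> 0 * (1 + 10 / (exp 1 * ln 2));
         Cobs = C1 / T_root r T * exp (C2 / T powr (\<gamma>1 * \<gamma>3 / (\<gamma>2 - \<gamma>1)) + C3 * T)
     in ereal (norm (S T x)) \<le> ereal Cobs * Lr_norm r T (\<lambda>t. C (S t x)))"
proof -
  interpret obs_set S C P M \<omega> lams d0 d1 \<gamma>1 d2 d3 \<gamma>2 \<gamma>3 T
    by unfold_locales (use assms in auto)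
  show ?thesis
  proof (intro allI impI)
    fix r :: ereal and x
    assume r: "1 \<le> r"
    define C1 where "C1 = (4 * M * d0) * max (((4 * d2 * M\<^sup>2) * (d0 * norm C + 1)) powr (8 / (exp 1 * ln 2)))
                                 (exp (4 * d1 * (2 * lams) powr \<gamma>1))"
    define C2 where "C2 = 4 * (2 powr \<gamma>1 * (2 * 4 powr \<gamma>3) powr (\<gamma>1 * \<gamma>2 / (\<gamma>2 - \<gamma>1))
                   * d1 powr \<gamma>2 / d3 powr \<gamma>1) powr (1 / (\<gamma>2 - \<gamma>1))"
    define C3 where "C3 = max \<omega> 0 * (1 + 10 / (exp 1 * ln 2))"
    have TT: "T > 0" using pos2(5) .
    have troot: "T_root r T = T powr pw r" unfolding T_root_def pw_def using TT by simp
    have pw01: "0 \<le> pw r" "pw r \<le> 1"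
    proof -
      have "0 \<le> pw r \<and> pw r \<le> 1"
      proof (cases "r = \<infinity>")
        case True then show ?thesis by (simp add: pw_def)
      next
        case False
        with r obtain \<rho> where "r = ereal \<rho>" "1 \<le> \<rho>" by (cases r) auto
        then show ?thesis by (simp add: pw_def)
      qed
      then show "0 \<le> pw r" "pw r \<le> 1" by auto
    qed
    have C1pos: "C1 > 0"
    proof -
      have "0 < exp (4 * d1 * (2 * lams) powr \<gamma>1)" by simp
      then have "0 < max (((4 * d2 * M\<^sup>2) * (d0 * norm C + 1)) powr (8 / (exp 1 * ln 2)))
                                 (exp (4 * d1 * (2 * lams) powr \<gamma>1))" by (simp add: less_max_iff_disj)
      then show ?thesis unfolding C1_def using M_ge pos1 by simp
    qed
    define K where "K = C1 / T_root r T * exp (C2 / T powr (\<gamma>1 * \<gamma>3 / (\<gamma>2 - \<gamma>1)) + C3 * T)"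
    have Kpos: "K > 0" unfolding K_def troot using C1pos TT by simp
    have cont: "continuous_on {0..T} (\<lambda>t. C (S t x))"
      by (rule blinfun.continuous_on[OF continuous_on_const semigroup_cont[OF semigroup TT growth]])
    have "ereal (norm (S T x)) \<le> ereal K * Lr_norm r T (\<lambda>t. C (S t x))"
    proof (rule lr_reduce[OF TT cont r Kpos])
      fix Q :: real assume Q: "0 \<le> Q"
      assume H: "\<And>\<alpha> \<beta> V. 0 \<le> \<alpha> \<Longrightarrow> \<alpha> < \<beta> \<Longrightarrow> \<beta> \<le> T \<Longrightarrow>
         (\<forall>s\<in>{\<alpha><..<\<beta>}. V \<le> norm (C (S s x))) \<Longrightarrow> V \<le> (1/(\<beta>-\<alpha>)) powr (pw r) * Q"
      show "norm (S T x) \<le> K * Q"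
        using main_real[OF Q pw01 H] unfolding K_def troot C1_def C2_def C3_def by simp
    qed
    then show "let C1 = (4 * M * d0) * max (((4 * d2 * M\<^sup>2) * (d0 * norm C + 1)) powr (8 / (exp 1 * ln 2)))
                                 (exp (4 * d1 * (2 * lams) powr \<gamma>1));
         C2 = 4 * (2 powr \<gamma>1 * (2 * 4 powr \<gamma>3) powr (\<gamma>1 * \<gamma>2 / (\<gamma>2 - \<gamma>1))
                   * d1 powr \<gamma>2 / d3 powr \<gamma>1) powr (1 / (\<gamma>2 - \<gamma>1));
         C3 = max \<omega> 0 * (1 + 10 / (exp 1 * ln 2));
         Cobs = C1 / T_root r T * exp (C2 / T powr (\<gamma>1 * \<gamma>3 / (\<gamma>2 - \<gamma>1)) + C3 * T)
     in ereal (norm (S T x)) \<le> ereal Cobs * Lr_norm r T (\<lambda>t. C (S t x))"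
      unfolding Let_def K_def C1_def C2_def C3_def .
  qed
qed

end
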